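(* Let $K$ be a field finitely generated over ${\mathbb F}_p$, let $h_1,\dots,h_m\in K$ be such that $K=K^{\langle p\rangle}h_1\oplus\cdots\oplus K^{\langle p\rangle}h_m$, and define $\pi_1,\dots,\pi_m:K\to K$ by $f=\sum_{i=1}^m\pi_i(f)^ph_i$ for all $f\in K$. If $V\subseteq K$ is a finite-dimensional ${\mathbb F}_p$-subspace, then there exists a finite-dimensional ${\mathbb F}_p$-subspace $W\subseteq K$ containing $V$ such that $\pi_i(VW)\subseteq W$ for all $i=1,\dots,m$.
   Context: $K^{\langle p\rangle}=\{f^p\mid f\in K\}$ is the subfield of $p$-th powers; the extension $K/K^{\langle p\rangle}$ is finite. For ${\mathbb F}_p$-subspaces $V,W\subseteq K$, $VW$ denotes the ${\mathbb F}_p$-span of all products $vw$ with $v\in V$, $w\in W$. *)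

theory Defs
  imports Main "HOL-Computational_Algebra.Primes"
begin

text \<open>The ambient field K is modelled as a type of class field; coefficients from F_p
are the elements of the form of_nat n (the prime field, when CHAR = p is prime).\<close>

definition Fp_span :: "'a::field set \<Rightarrow> 'a set" where
  "Fp_span S = {x. \<exists>T c. finite T \<and> T \<subseteq> S \<and> x = (\<Sum>s\<in>T. of_nat (c s) * s)}"

definition Fp_subspace :: "'a::field set \<Rightarrow> bool" where
  "Fp_subspace V \<longleftrightarrow> 0 \<in> V \<and> (\<forall>x\<in>V. \<forall>y\<in>V. x + y \<in> V)
      \<and> (\<forall>x\<in>V. \<forall>n::nat. of_nat n * x \<in> V)"

definition Fp_fin_dim :: "'a::field set \<Rightarrow> bool" where
  "Fp_fin_dim V \<longleftrightarrow> (\<exists>S. finite S \<and> S \<subseteq> V \<and> Fp_span S = V)"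

definition Fp_prod :: "'a::field set \<Rightarrow> 'a set \<Rightarrow> 'a set" where
  "Fp_prod V W = Fp_span {v * w | v w. v \<in> V \<and> w \<in> W}"

definition is_subfield :: "'a::field set \<Rightarrow> bool" where
  "is_subfield F \<longleftrightarrow> 0 \<in> F \<and> 1 \<in> F \<and> (\<forall>x\<in>F. \<forall>y\<in>F. x + y \<in> F \<and> x * y \<in> F)
      \<and> (\<forall>x\<in>F. - x \<in> F \<and> inverse x \<in> F)"

definition generated_subfield :: "'a::field set \<Rightarrow> 'a set" where
  "generated_subfield S = \<Inter>{F. S \<subseteq> F \<and> is_subfield F}"

definition fin_gen_field :: "'a::field itself \<Rightarrow> bool" where
  "fin_gen_field _ \<longleftrightarrow> (\<exists>S::'a set. finite S \<and> generated_subfield S = UNIV)"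

end

theory Submission
  imports Defs
begin

lemma frob_add:
  fixes x y :: "'a::comm_ring_1"
  assumes "prime (CHAR('a))"
  shows "(x+y)^CHAR('a) = x^CHAR('a) + y^CHAR('a)"
proof -
  define p where "p = CHAR('a)"
  have p0: "p \<noteq> 0" using assms p_def prime_gt_0_nat by auto
  have "(x+y)^p = (\<Sum>k\<le>p. of_nat (p choose k) * x^k * y^(p-k))" by (rule binomial_ring)
  also have "\<dots> = (\<Sum>k\<in>{0,p}. of_nat (p choose k) * x^k * y^(p-k))"
  proof (rule sum.mono_neutral_right)
    show "\<forall>k\<in>{..p} - {0, p}. of_nat (p choose k) * x ^ k * y ^ (p - k) = (0::'a)"
    proof
      fix k assume k: "k \<in> {..p} - {0, p}"
      have "p dvd (p choose k)" using k p0 assms p_def by (intro dvd_choose_prime) auto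
      hence "of_nat (p choose k) = (0::'a)" using p_def of_nat_eq_0_iff_char_dvd by blast
      thus "of_nat (p choose k) * x ^ k * y ^ (p - k) = (0::'a)" by simp
    qed
  qed auto
  also have "\<dots> = x^p + y^p" using p0 by simp
  finally show ?thesis unfolding p_def .
qed

lemma frob_diff:
  fixes x y :: "'a::comm_ring_1"
  assumes "prime (CHAR('a))"
  shows "(x-y)^CHAR('a) = x^CHAR('a) - y^CHAR('a)"
proof -
  have "(x-y)^CHAR('a) = (x + (-y))^CHAR('a)" by simp
  also have "\<dots> = x^CHAR('a) + (-y)^CHAR('a)" by (rule frob_add[OF assms])
  also have "(-y)^CHAR('a) = - (y^CHAR('a))" using minus_power_prime_CHAR assms by blast
  finally show ?thesis by simp
qed

lemma frob_of_nat:
  assumes "prime (CHAR('a::comm_ring_1))"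
  shows "(of_nat n :: 'a)^CHAR('a) = of_nat n"
proof (induction n)
  case 0 then show ?case using assms prime_gt_0_nat by (simp add: power_0_left)
next
  case (Suc n)
  have "(of_nat (Suc n)::'a)^CHAR('a) = (of_nat n + 1)^CHAR('a)" by (simp add: add.commute)
  also have "\<dots> = of_nat n ^CHAR('a) + 1" using frob_add[OF assms] by simp
  finally show ?case using Suc by simp
qed

lemma span_sub:
  assumes "Fp_subspace W" "S \<subseteq> W" shows "Fp_span S \<subseteq> W"
proof
  fix x assume "x \<in> Fp_span S"
  then obtain T c where T: "finite T" "T \<subseteq> S" "x = (\<Sum>s\<in>T. of_nat (c s) * s)"
    unfolding Fp_span_def by blast
  have "T \<subseteq> S \<Longrightarrow> (\<Sum>s\<in>T. of_nat (c s) * s) \<in> W" using T(1)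
  proof (induction T rule: finite_induct)
    case empty then show ?case using assms(1) unfolding Fp_subspace_def by simp
  next
    case (insert a F)
    then show ?case using assms unfolding Fp_subspace_def by auto
  qed
  then show "x \<in> W" using T by simp
qed

lemma span_base: "S \<subseteq> Fp_span S"
proof
  fix x assume "x \<in> S"
  then show "x \<in> Fp_span S" unfolding Fp_span_def
    by (intro CollectI exI[of _ "{x}"] exI[of _ "\<lambda>_. 1"]) auto
qed

lemma span_subspace: "Fp_subspace (Fp_span S)"
  unfolding Fp_subspace_def
proof (intro conjI ballI allI)
  show "0 \<in> Fp_span S" unfolding Fp_span_def
    by (rule CollectI, rule exI[of _ "{}"], rule exI[of _ "\<lambda>_. 0"]) simp
next
  fix x y assume "x \<in> Fp_span S" "y \<in> Fp_span S"
  then obtain T1 c1 T2 c2 where T: "finite T1" "T1 \<subseteq> S" "x = (\<Sum>s\<in>T1. of_nat (c1 s) * s)"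
     "finite T2" "T2 \<subseteq> S" "y = (\<Sum>s\<in>T2. of_nat (c2 s) * s)"
    unfolding Fp_span_def by blast
  define d1 where "d1 s = (if s \<in> T1 then c1 s else 0)" for s
  define d2 where "d2 s = (if s \<in> T2 then c2 s else 0)" for s
  have x: "x = (\<Sum>s\<in>T1\<union>T2. of_nat (d1 s) * s)" unfolding T(3)
    by (rule sum.mono_neutral_cong_left) (simp_all add: T d1_def)
  have y: "y = (\<Sum>s\<in>T1\<union>T2. of_nat (d2 s) * s)" unfolding T(6)
    by (rule sum.mono_neutral_cong_left) (simp_all add: T d2_def)
  have "x + y = (\<Sum>s\<in>T1\<union>T2. of_nat (d1 s) * s + of_nat (d2 s) * s)"
    unfolding x y by (rule sum.distrib[symmetric])
  also have "\<dots> = (\<Sum>s\<in>T1\<union>T2. of_nat (d1 s + d2 s) * s)"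
    by (rule sum.cong) (simp_all add: distrib_right)
  finally have "x + y = (\<Sum>s\<in>T1\<union>T2. of_nat (d1 s + d2 s) * s)" .
  moreover have "finite (T1 \<union> T2)" "T1 \<union> T2 \<subseteq> S" using T by auto
  ultimately show "x + y \<in> Fp_span S" unfolding Fp_span_def
    by (intro CollectI exI[of _ "T1 \<union> T2"] exI[of _ "\<lambda>s. d1 s + d2 s"]) simp
next
  fix x and n :: nat assume "x \<in> Fp_span S"
  then obtain T c where T: "finite T" "T \<subseteq> S" "x = (\<Sum>s\<in>T. of_nat (c s) * s)"
    unfolding Fp_span_def by blast
  have "of_nat n * x = (\<Sum>s\<in>T. of_nat (n * c s) * s)" unfolding T(3)
    by (simp add: sum_distrib_left mult.assoc)
  then show "of_nat n * x \<in> Fp_span S" unfolding Fp_span_def using T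
    by (intro CollectI exI[of _ T] exI[of _ "\<lambda>s. n * c s"]) simp
qed

lemma span_mono: "S \<subseteq> S' \<Longrightarrow> Fp_span S \<subseteq> Fp_span S'"
  by (meson span_base span_sub span_subspace subset_trans)

lemma fin_dim_span: "finite S \<Longrightarrow> Fp_fin_dim (Fp_span S)"
  unfolding Fp_fin_dim_def using span_base by blast

definition lin :: "('a::field \<Rightarrow> 'a) \<Rightarrow> bool" where
  "lin f \<longleftrightarrow> (\<forall>x y. f (x+y) = f x + f y) \<and> (\<forall>n x. f (of_nat n * x) = of_nat n * f x)"

lemma span_image:
  assumes "lin f" "Fp_subspace W" "\<And>x. x \<in> S \<Longrightarrow> f x \<in> W" "y \<in> Fp_span S"
  shows "f y \<in> W"
proof -
  have f0: "f 0 = 0" using assms(1) unfolding lin_def by (metis add_cancel_right_right add_0)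
  have "Fp_subspace {y. f y \<in> W}" using assms(1,2) f0 unfolding Fp_subspace_def lin_def by auto
  then have "Fp_span S \<subseteq> {y. f y \<in> W}" using assms(3) by (intro span_sub) auto
  then show ?thesis using assms(4) by auto
qed

lemma lin_mult: "lin (\<lambda>x. a * x)" unfolding lin_def by (simp add: algebra_simps)
lemma lin_mult2: "lin (\<lambda>x. x * a)" unfolding lin_def by (simp add: algebra_simps)
lemma lin_div: "lin (\<lambda>x. x / a)" unfolding lin_def by (simp add: algebra_simps add_divide_distrib)

lemma span_mult:
  assumes "Fp_subspace Z" "\<And>x y. x \<in> X \<Longrightarrow> y \<in> Y \<Longrightarrow> x * y \<in> Z"
    "x \<in> Fp_span X" "y \<in> Fp_span Y"
  shows "x * y \<in> Z"
proof -
  have "x' * y \<in> Z" if "x' \<in> X" for x'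
    by (rule span_image[OF lin_mult assms(1) _ assms(4)]) (use assms(2) that in auto)
  then show ?thesis by (intro span_image[OF lin_mult2 assms(1) _ assms(3)])
qed

definition mon :: "(nat \<Rightarrow> 'a::field) \<Rightarrow> nat \<Rightarrow> (nat \<Rightarrow> nat) \<Rightarrow> 'a" where
  "mon g s e = (\<Prod>j<s. g j ^ e j)"
definition Exs :: "nat \<Rightarrow> nat \<Rightarrow> (nat \<Rightarrow> nat) set" where
  "Exs s d = {e. (\<forall>j\<ge>s. e j = 0) \<and> (\<Sum>j<s. e j) \<le> d}"
definition Rsp :: "(nat \<Rightarrow> 'a::field) \<Rightarrow> nat \<Rightarrow> nat \<Rightarrow> 'a set" where
  "Rsp g s d = Fp_span (mon g s ` Exs s d)"

lemma Ex_finite: "finite (Exs s d)"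
proof (rule finite_subset)
  show "Exs s d \<subseteq> {f. \<forall>x. (x \<in> {..<s} \<longrightarrow> f x \<in> {..d}) \<and> (x \<notin> {..<s} \<longrightarrow> f x = 0)}"
  proof
    fix e assume e: "e \<in> Exs s d"
    have "e x \<le> d" if "x < s" for x
    proof -
      have "e x \<le> (\<Sum>j<s. e j)" using that by (intro member_le_sum) auto
      then show ?thesis using e unfolding Exs_def by auto
    qed
    then show "e \<in> {f. \<forall>x. (x \<in> {..<s} \<longrightarrow> f x \<in> {..d}) \<and> (x \<notin> {..<s} \<longrightarrow> f x = 0)}"
      using e unfolding Exs_def by auto
  qed
  show "finite {f. \<forall>x. (x \<in> {..<s} \<longrightarrow> f x \<in> {..d}) \<and> (x \<notin> {..<s} \<longrightarrow> f x = (0::nat))}"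
    by (rule finite_set_of_finite_funs) auto
qed

lemma Ex_mono: "d \<le> d' \<Longrightarrow> Exs s d \<subseteq> Exs s d'"
  unfolding Exs_def by auto

lemma Ex_add: "e \<in> Exs s d \<Longrightarrow> e' \<in> Exs s d' \<Longrightarrow> (\<lambda>j. e j + e' j) \<in> Exs s (d + d')"
  unfolding Exs_def by (auto simp: sum.distrib)

lemma mon_add: "mon g s (\<lambda>j. e j + e' j) = mon g s e * mon g s e'"
  unfolding mon_def by (simp add: power_add prod.distrib)

lemma Rsp_subspace: "Fp_subspace (Rsp g s d)"
  unfolding Rsp_def by (rule span_subspace)

lemma Rsp_fin_dim: "Fp_fin_dim (Rsp g s d)"
  unfolding Rsp_def by (rule fin_dim_span) (simp add: Ex_finite)

lemma mon_in_Rsp: "e \<in> Exs s d \<Longrightarrow> mon g s e \<in> Rsp g s d"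
  unfolding Rsp_def using span_base by blast

lemma Rsp_mono: "d \<le> d' \<Longrightarrow> Rsp g s d \<subseteq> Rsp g s d'"
  unfolding Rsp_def by (intro span_mono image_mono Ex_mono)

lemma Rsp_mult: "x \<in> Rsp g s d \<Longrightarrow> y \<in> Rsp g s d' \<Longrightarrow> x * y \<in> Rsp g s (d + d')"
proof -
  assume x: "x \<in> Rsp g s d" and y: "y \<in> Rsp g s d'"
  show ?thesis
  proof (rule span_mult[OF Rsp_subspace])
    show "x \<in> Fp_span (mon g s ` Exs s d)" using x unfolding Rsp_def .
    show "y \<in> Fp_span (mon g s ` Exs s d')" using y unfolding Rsp_def .
    fix a b assume "a \<in> mon g s ` Exs s d" "b \<in> mon g s ` Exs s d'"
    then obtain e e' where "e \<in> Exs s d" "e' \<in> Exs s d'" "a = mon g s e" "b = mon g s e'" by blast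
    then show "a * b \<in> Rsp g s (d + d')"
      using mon_add[of g s e e'] Ex_add mon_in_Rsp by metis
  qed
qed

lemma one_in_Rsp: "1 \<in> Rsp g s d"
proof -
  have "(\<lambda>_. 0) \<in> Exs s d" unfolding Exs_def by simp
  moreover have "mon g s (\<lambda>_. 0) = 1" unfolding mon_def by simp
  ultimately show ?thesis using mon_in_Rsp by metis
qed

lemma gen_in_Rsp: "j < s \<Longrightarrow> g j \<in> Rsp g s 1"
proof -
  assume j: "j < s"
  have "(\<lambda>k. if k = j then 1 else 0) \<in> Exs s 1" unfolding Exs_def using j by auto
  moreover have "mon g s (\<lambda>k. if k = j then 1 else 0) = g j"
  proof -
    have "(\<Prod>k<s. g k ^ (if k = j then 1 else 0)) = (\<Prod>k<s. if k = j then g k else 1)"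
      by (rule prod.cong) auto
    also have "\<dots> = g j" using j by (simp add: prod.delta)
    finally show ?thesis unfolding mon_def .
  qed
  ultimately show ?thesis using mon_in_Rsp by metis
qed

lemma Rsp_pow: "x \<in> Rsp g s d \<Longrightarrow> x ^ n \<in> Rsp g s (n * d)"
proof (induction n)
  case 0 then show ?case using one_in_Rsp by simp
next
  case (Suc n) then show ?case using Rsp_mult[of x g s d "x^n" "n*d"] by (simp add: add.commute)
qed

lemma mon_split:
  "mon g s e = (mon g s (\<lambda>j. e j div p)) ^ p * mon g s (\<lambda>j. e j mod p)"
proof -
  have "g j ^ e j = (g j ^ (e j div p)) ^ p * g j ^ (e j mod p)" for j
    by (metis power_add power_mult mult.commute div_mult_mod_eq)
  then show ?thesis unfolding mon_def by (simp add: prod.distrib prod_power_distrib)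
qed

lemma Ex_div: assumes "e \<in> Exs s d" "p > 0" shows "(\<lambda>j. e j div p) \<in> Exs s (d div p)"
proof -
  have "p * (\<Sum>j<s. e j div p) = (\<Sum>j<s. p * (e j div p))" by (simp add: sum_distrib_left)
  also have "\<dots> \<le> (\<Sum>j<s. e j)" by (intro sum_mono) simp
  also have "\<dots> \<le> d" using assms unfolding Exs_def by auto
  finally have "(\<Sum>j<s. e j div p) \<le> d div p"
    using assms(2) by (simp add: less_eq_div_iff_mult_less_eq mult.commute)
  then show ?thesis using assms unfolding Exs_def by auto
qed

definition Red :: "nat \<Rightarrow> nat \<Rightarrow> (nat \<Rightarrow> nat) set" where
  "Red s p = {r \<in> Exs s (s * p). \<forall>j. r j < p}"

lemma Red_finite: "finite (Red s p)"
  unfolding Red_def using Ex_finite by auto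

lemma Ex_mod: assumes "e \<in> Exs s d" "p > 0" shows "(\<lambda>j. e j mod p) \<in> Red s p"
proof -
  have "(\<Sum>j<s. e j mod p) \<le> (\<Sum>j<(s::nat). p)" by (intro sum_mono) (use assms in simp)
  then show ?thesis using assms unfolding Red_def Exs_def by (auto simp: mult.commute)
qed

lemma pi_uniq:
  fixes h :: "nat \<Rightarrow> 'a::field"
  assumes "prime (CHAR('a))"
    and indep: "\<forall>g. (\<Sum>i<m. g i ^ CHAR('a) * h i) = 0 \<longrightarrow> (\<forall>i<m. g i = 0)"
    and eq: "(\<Sum>i<m. a i ^ CHAR('a) * h i) = (\<Sum>i<m. b i ^ CHAR('a) * h i)"
    and i: "i < m"
  shows "a i = b i"
proof -
  have "(\<Sum>i<m. (a i - b i) ^ CHAR('a) * h i) = (\<Sum>i<m. a i ^ CHAR('a) * h i - b i ^ CHAR('a) * h i)"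
    by (rule sum.cong) (simp_all add: frob_diff[OF assms(1)] left_diff_distrib)
  also have "\<dots> = 0" using eq by (simp add: sum_subtractf)
  finally have "(\<Sum>i<m. (a i - b i) ^ CHAR('a) * h i) = 0" .
  then show ?thesis using spec[OF indep, of "\<lambda>i. a i - b i"] i by simp
qed

lemma pi_add:
  fixes h :: "nat \<Rightarrow> 'a::field"
  assumes "prime (CHAR('a))"
    and indep: "\<forall>g. (\<Sum>i<m. g i ^ CHAR('a) * h i) = 0 \<longrightarrow> (\<forall>i<m. g i = 0)"
    and pi: "\<forall>f. f = (\<Sum>i<m. \<pi> i f ^ CHAR('a) * h i)"
    and i: "i < m"
  shows "\<pi> i (x + y) = \<pi> i x + \<pi> i y"
proof (rule pi_uniq[OF assms(1) indep _ i])
  have "(\<Sum>i<m. (\<pi> i x + \<pi> i y) ^ CHAR('a) * h i)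
      = (\<Sum>i<m. \<pi> i x ^ CHAR('a) * h i) + (\<Sum>i<m. \<pi> i y ^ CHAR('a) * h i)"
    by (simp add: frob_add[OF assms(1)] distrib_right sum.distrib)
  also have "\<dots> = x + y" using pi by metis
  also have "\<dots> = (\<Sum>i<m. \<pi> i (x + y) ^ CHAR('a) * h i)" using pi by metis
  finally show "(\<Sum>i<m. \<pi> i (x + y) ^ CHAR('a) * h i) = (\<Sum>i<m. (\<pi> i x + \<pi> i y) ^ CHAR('a) * h i)"
    by simp
qed

lemma pi_pow:
  fixes h :: "nat \<Rightarrow> 'a::field"
  assumes "prime (CHAR('a))"
    and indep: "\<forall>g. (\<Sum>i<m. g i ^ CHAR('a) * h i) = 0 \<longrightarrow> (\<forall>i<m. g i = 0)"
    and pi: "\<forall>f. f = (\<Sum>i<m. \<pi> i f ^ CHAR('a) * h i)"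
    and i: "i < m"
  shows "\<pi> i (a ^ CHAR('a) * y) = a * \<pi> i y"
proof (rule pi_uniq[OF assms(1) indep _ i])
  have "(\<Sum>i<m. (a * \<pi> i y) ^ CHAR('a) * h i) = a ^ CHAR('a) * (\<Sum>i<m. \<pi> i y ^ CHAR('a) * h i)"
    by (simp add: sum_distrib_left power_mult_distrib mult.assoc)
  also have "\<dots> = a ^ CHAR('a) * y" using pi by metis
  also have "\<dots> = (\<Sum>i<m. \<pi> i (a ^ CHAR('a) * y) ^ CHAR('a) * h i)" using pi by metis
  finally show "(\<Sum>i<m. \<pi> i (a ^ CHAR('a) * y) ^ CHAR('a) * h i) = (\<Sum>i<m. (a * \<pi> i y) ^ CHAR('a) * h i)"
    by simp
qed

lemma pi_lin:
  fixes h :: "nat \<Rightarrow> 'a::field"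
  assumes "prime (CHAR('a))"
    and indep: "\<forall>g. (\<Sum>i<m. g i ^ CHAR('a) * h i) = 0 \<longrightarrow> (\<forall>i<m. g i = 0)"
    and pi: "\<forall>f. f = (\<Sum>i<m. \<pi> i f ^ CHAR('a) * h i)"
    and i: "i < m"
  shows "lin (\<pi> i)"
  unfolding lin_def
proof (intro conjI allI)
  fix x y show "\<pi> i (x + y) = \<pi> i x + \<pi> i y" by (rule pi_add[OF assms])
next
  fix n and x :: 'a
  have "\<pi> i (of_nat n * x) = \<pi> i ((of_nat n) ^ CHAR('a) * x)" by (simp add: frob_of_nat[OF assms(1)])
  also have "\<dots> = of_nat n * \<pi> i x" by (rule pi_pow[OF assms])
  finally show "\<pi> i (of_nat n * x) = of_nat n * \<pi> i x" .
qed

lemma lin_comp: "lin f \<Longrightarrow> lin f' \<Longrightarrow> lin (\<lambda>x. f (f' x))"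
  unfolding lin_def by simp

lemma prod_closed:
  assumes "finite I" "\<And>i. i \<in> I \<Longrightarrow> f i \<in> A" "1 \<in> A" "\<And>x y. x \<in> A \<Longrightarrow> y \<in> A \<Longrightarrow> x * y \<in> A"
  shows "prod f I \<in> A"
  using assms(1,2) by (induction I rule: finite_induct) (simp_all add: assms(3,4))

lemma frac:
  fixes A :: "'a::field set"
  assumes gen: "generated_subfield S0 = UNIV" and S0: "S0 \<subseteq> A"
    and A0: "0 \<in> A" and A1: "1 \<in> A"
    and Aadd: "\<And>x y. x \<in> A \<Longrightarrow> y \<in> A \<Longrightarrow> x + y \<in> A"
    and Amul: "\<And>x y. x \<in> A \<Longrightarrow> y \<in> A \<Longrightarrow> x * y \<in> A"
    and Aneg: "\<And>x. x \<in> A \<Longrightarrow> - x \<in> A"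
  shows "\<exists>a b. a \<in> A \<and> b \<in> A \<and> b \<noteq> 0 \<and> z = a / b"
proof -
  define F where "F = {z. \<exists>a b. a \<in> A \<and> b \<in> A \<and> b \<noteq> 0 \<and> z = a / b}"
  have inF: "a \<in> A \<Longrightarrow> b \<in> A \<Longrightarrow> b \<noteq> 0 \<Longrightarrow> a / b \<in> F" for a b unfolding F_def by blast
  have AF: "x \<in> A \<Longrightarrow> x \<in> F" for x using inF[of x 1] A1 by simp
  have "is_subfield F" unfolding is_subfield_def
  proof (intro conjI ballI)
    show "0 \<in> F" using AF A0 by simp
    show "1 \<in> F" using AF A1 by simp
  next
    fix x y assume "x \<in> F" "y \<in> F"
    then obtain a b c d where abcd: "a \<in> A" "b \<in> A" "b \<noteq> 0" "x = a / b"
      "c \<in> A" "d \<in> A" "d \<noteq> 0" "y = c / d" unfolding F_def by blast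
    have "x + y = (a * d + c * b) / (b * d)" using abcd by (simp add: field_simps)
    then show "x + y \<in> F" using abcd by (metis inF Aadd Amul no_zero_divisors)
    have "x * y = (a * c) / (b * d)" using abcd by simp
    then show "x * y \<in> F" using abcd by (metis inF Amul no_zero_divisors)
  next
    fix x assume "x \<in> F"
    then obtain a b where ab: "a \<in> A" "b \<in> A" "b \<noteq> 0" "x = a / b" unfolding F_def by blast
    have "- x = (- a) / b" using ab by simp
    then show "- x \<in> F" using ab inF Aneg by metis
    show "inverse x \<in> F"
    proof (cases "a = 0")
      case True then show ?thesis using ab AF A0 by simp
    next
      case False
      have "inverse x = b / a" using ab by simp
      then show ?thesis using ab False inF by metis
    qed
  qed
  then have "UNIV \<subseteq> F" using gen S0 AF unfolding generated_subfield_def by blast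
  then show ?thesis unfolding F_def by blast
qed

theorem proposition5p2:
  fixes p m :: nat and h :: "nat \<Rightarrow> 'a::field" and \<pi> :: "nat \<Rightarrow> 'a \<Rightarrow> 'a"
    and V :: "'a set"
  assumes "prime p" and "CHAR('a) = p"
    and "fin_gen_field TYPE('a)"
    and span: "\<forall>f::'a. \<exists>g. f = (\<Sum>i<m. g i ^ p * h i)"
    and indep: "\<forall>g. (\<Sum>i<m. g i ^ p * h i) = 0 \<longrightarrow> (\<forall>i<m. g i = 0)"
    and pi: "\<forall>f. f = (\<Sum>i<m. \<pi> i f ^ p * h i)"
    and "Fp_subspace V" and "Fp_fin_dim V"
  shows "\<exists>W. Fp_subspace W \<and> Fp_fin_dim W \<and> V \<subseteq> W \<and>
           (\<forall>i<m. \<pi> i ` Fp_prod V W \<subseteq> W)"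
proof -
  have pr: "prime (CHAR('a))" using assms(1,2) by simp
  have p2: "p \<ge> 2" using prime_ge_2_nat[OF assms(1)] .
  have p0: "p > 0" using p2 by simp
  have indep': "\<forall>g. (\<Sum>i<m. g i ^ CHAR('a) * h i) = 0 \<longrightarrow> (\<forall>i<m. g i = 0)"
    using indep assms(2) by simp
  have pi': "\<forall>f. f = (\<Sum>i<m. \<pi> i f ^ CHAR('a) * h i)" using pi assms(2) by simp
  have lin_pi: "lin (\<pi> i)" if "i < m" for i using pi_lin[OF pr indep' pi' that] .
  have pipow: "\<pi> i (a ^ p * y) = a * \<pi> i y" if "i < m" for i a y
    using pi_pow[OF pr indep' pi' that] assms(2) by simp
  obtain S0 :: "'a set" where S0: "finite S0" "generated_subfield S0 = UNIV"
    using assms(3) unfolding fin_gen_field_def by blast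
  obtain SV where SV: "finite SV" "SV \<subseteq> V" "Fp_span SV = V"
    using assms(8) unfolding Fp_fin_dim_def by blast
  have "finite (S0 \<union> SV)" using S0(1) SV(1) by simp
  from finite_list[OF this] obtain gs where gs: "set gs = S0 \<union> SV" ..
  define s where "s = length gs"
  define g where "g j = gs ! j" for j
  have ginR: "x \<in> Rsp g s 1" if xg: "x \<in> set gs" for x
  proof -
    obtain j where "j < s" "gs ! j = x" using xg unfolding s_def in_set_conv_nth by blast
    then show ?thesis using gen_in_Rsp[of j s g] unfolding g_def by simp
  qed
  define A where "A = {x. \<exists>d. x \<in> Rsp g s d}"
  have A0: "0 \<in> A" unfolding A_def using Rsp_subspace unfolding Fp_subspace_def by blast
  have A1: "1 \<in> A" unfolding A_def using one_in_Rsp by blast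
  have Aadd: "x + y \<in> A" if xy: "x \<in> A" "y \<in> A" for x y
  proof -
    obtain d d' where "x \<in> Rsp g s d" "y \<in> Rsp g s d'" using xy unfolding A_def by blast
    then have "x \<in> Rsp g s (d + d')" "y \<in> Rsp g s (d + d')"
      using Rsp_mono[of d "d+d'" g s] Rsp_mono[of d' "d+d'" g s] by auto
    then have "x + y \<in> Rsp g s (d + d')" using Rsp_subspace[of g s "d + d'"] unfolding Fp_subspace_def by blast
    then show ?thesis unfolding A_def by blast
  qed
  have Amul: "x * y \<in> A" if xy: "x \<in> A" "y \<in> A" for x y
  proof -
    obtain d d' where "x \<in> Rsp g s d" "y \<in> Rsp g s d'" using xy unfolding A_def by blast
    then have "x * y \<in> Rsp g s (d + d')" by (rule Rsp_mult)
    then show ?thesis unfolding A_def by blast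
  qed
  have m1: "of_nat (p - 1) = (-1::'a)" using p0 of_nat_diff[of 1 p] of_nat_CHAR assms(2)
    by (metis diff_0 le_add_diff_inverse2 less_one not_less of_nat_1 of_nat_0_le_iff)
  have Aneg: "- x \<in> A" if xy: "x \<in> A" for x
  proof -
    obtain d where "x \<in> Rsp g s d" using xy unfolding A_def by blast
    then have "of_nat (p - 1) * x \<in> Rsp g s d" using Rsp_subspace unfolding Fp_subspace_def by blast
    then show ?thesis using m1 unfolding A_def by auto
  qed
  have S0A: "S0 \<subseteq> A" using gs ginR unfolding A_def by blast
  have "\<forall>z. \<exists>q. fst q \<in> A \<and> snd q \<in> A \<and> snd q \<noteq> 0 \<and> z = fst q / snd q"
  proof
    fix z :: 'a
    obtain a b where "a \<in> A \<and> b \<in> A \<and> b \<noteq> 0 \<and> z = a / b"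
      using frac[OF S0(2) S0A A0 A1 Aadd Amul Aneg] by blast
    then show "\<exists>q. fst q \<in> A \<and> snd q \<in> A \<and> snd q \<noteq> 0 \<and> z = fst q / snd q"
      by (intro exI[of _ "(a, b)"]) simp
  qed
  from choice[OF this] obtain Q where Q: "\<forall>z. fst (Q z) \<in> A \<and> snd (Q z) \<in> A \<and> snd (Q z) \<noteq> 0 \<and> z = fst (Q z) / snd (Q z)"
    by blast
  define I where "I = {..<m} \<times> Red s p"
  define z where "z ir = \<pi> (fst ir) (mon g s (snd ir))" for ir
  define D where "D = (\<Prod>ir\<in>I. snd (Q (z ir)))"
  have finI: "finite I" unfolding I_def using Red_finite by simp
  have DA: "D \<in> A" unfolding D_def by (rule prod_closed[OF finI _ A1 Amul]) (use Q in blast)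
  have D0: "D \<noteq> 0" unfolding D_def using finI Q by simp
  have zDA: "z ir * D \<in> A" if "ir \<in> I" for ir
  proof -
    have "D = snd (Q (z ir)) * (\<Prod>jr\<in>I - {ir}. snd (Q (z jr)))"
      unfolding D_def using finI that by (rule prod.remove)
    moreover have "z ir = fst (Q (z ir)) / snd (Q (z ir))" using Q by blast
    ultimately have "z ir * D = fst (Q (z ir)) * (\<Prod>jr\<in>I - {ir}. snd (Q (z jr)))"
      using Q by (metis (no_types, lifting) nonzero_mult_div_cancel_left times_divide_eq_left times_divide_eq_right)
    moreover have "(\<Prod>jr\<in>I - {ir}. snd (Q (z jr))) \<in> A"
      by (rule prod_closed[OF _ _ A1 Amul]) (use finI Q in auto)
    ultimately show ?thesis using Q Amul by metis
  qed
  obtain \<delta> where Dd: "D \<in> Rsp g s \<delta>" using DA unfolding A_def by blast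
  have "\<forall>ir\<in>I. \<exists>d. z ir * D \<in> Rsp g s d" using zDA unfolding A_def by blast
  from bchoice[OF this] obtain dd where dd: "\<forall>ir\<in>I. z ir * D \<in> Rsp g s (dd ir)" by blast
  define E where "E = 1 + sum dd I"
  have zE: "z ir * D \<in> Rsp g s E" if "ir \<in> I" for ir
  proof -
    have "dd ir \<le> sum dd I" using finI that by (intro member_le_sum) auto
    then show ?thesis using dd that Rsp_mono[of "dd ir" E g s] unfolding E_def by auto
  qed
  define lam where "lam = \<delta> + E"
  define L where "L = lam * p"
  define W where "W = Fp_span ((\<lambda>x. x / D^p) ` mon g s ` Exs s L)"
  have Wsub: "Fp_subspace W" unfolding W_def by (rule span_subspace)
  have Wfin: "Fp_fin_dim W" unfolding W_def by (rule fin_dim_span) (simp add: Ex_finite)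
  have inW: "y / D^p \<in> W" if yL: "y \<in> Rsp g s L" for y
  proof -
    have "(\<lambda>x. x / D^p) y \<in> W"
    proof (rule span_image[OF lin_div Wsub])
      fix x assume "x \<in> mon g s ` Exs s L"
      then have "x / D^p \<in> (\<lambda>x. x / D^p) ` mon g s ` Exs s L" by (rule imageI)
      then show "x / D^p \<in> W" unfolding W_def by (rule subsetD[OF span_base])
    next
      show "y \<in> Fp_span (mon g s ` Exs s L)" using yL unfolding Rsp_def .
    qed
    then show ?thesis by simp
  qed
  have VR1: "V \<subseteq> Rsp g s 1"
  proof -
    have "SV \<subseteq> Rsp g s 1" using ginR gs by blast
    then show ?thesis using span_sub[OF Rsp_subspace] SV(3) by blast
  qed
  have VW: "V \<subseteq> W"
  proof
    fix v assume "v \<in> V"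
    then have "v \<in> Rsp g s 1" using VR1 by (rule subsetD[rotated])
    then have "v * D^p \<in> Rsp g s (1 + p * \<delta>)" by (rule Rsp_mult[OF _ Rsp_pow[OF Dd]])
    moreover have "1 + p * \<delta> \<le> L"
    proof -
      have "1 \<le> E * p" using p0 unfolding E_def by simp
      then show ?thesis unfolding L_def lam_def by (simp add: algebra_simps)
    qed
    ultimately have "v * D^p \<in> Rsp g s L" using Rsp_mono[of "1 + p * \<delta>" L g s] by blast
    then have "v * D^p / D^p \<in> W" by (rule inW)
    then show "v \<in> W" using D0 by simp
  qed
  have key: "\<pi> i (mon g s e) * D \<in> Rsp g s (k div p + E)" if i: "i < m" and e: "e \<in> Exs s k" for i e k
  proof -
    define q where "q j = e j div p" for j
    define r where "r j = e j mod p" for j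
    have "mon g s e = mon g s q ^ p * mon g s r" unfolding q_def r_def by (rule mon_split)
    then have "\<pi> i (mon g s e) = mon g s q * \<pi> i (mon g s r)" using pipow[OF i] by simp
    moreover have "(i, r) \<in> I" unfolding I_def r_def using Ex_mod[OF e p0] i by simp
    moreover have "z (i, r) = \<pi> i (mon g s r)" unfolding z_def by simp
    ultimately have "\<pi> i (mon g s e) * D = mon g s q * (z (i, r) * D)" by (simp add: mult.assoc)
    moreover have "mon g s q \<in> Rsp g s (k div p)" unfolding q_def
      by (rule mon_in_Rsp) (rule Ex_div[OF e p0])
    ultimately show ?thesis using Rsp_mult[OF _ zE[OF \<open>(i, r) \<in> I\<close>]] by metis
  qed
  have core: "\<pi> i (mon g s e / D^p) \<in> W" if i: "i < m" and e: "e \<in> Exs s (L + 1)" for i e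
  proof -
    define X where "X = \<pi> i (mon g s e) * D"
    have Ldiv: "(L + 1) div p = lam"
    proof -
      have "(1 + lam * p) div p = lam + 1 div p" using p0 by (intro div_mult_self1) simp
      moreover have "1 div p = 0" using p2 by simp
      ultimately show ?thesis unfolding L_def by (simp add: add.commute)
    qed
    have X: "X \<in> Rsp g s (lam + E)" unfolding X_def using key[OF i e] Ldiv by simp
    have "X * D^(p-2) \<in> Rsp g s (lam + E + (p - 2) * \<delta>)"
      using Rsp_mult[OF X Rsp_pow[OF Dd]] .
    moreover have "lam + E + (p - 2) * \<delta> \<le> L"
    proof -
      have "(p - 2) * \<delta> + 2 * \<delta> = p * \<delta>" using p2 by (metis le_add_diff_inverse2 add_mult_distrib)
      moreover have "2 * E \<le> p * E" using p2 by (rule mult_le_mono1)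
      moreover have "L = p * \<delta> + p * E" unfolding L_def lam_def by (simp add: algebra_simps)
      ultimately show ?thesis unfolding lam_def by linarith
    qed
    ultimately have "X * D^(p-2) \<in> Rsp g s L" using Rsp_mono[of _ L g s] by blast
    then have "X * D^(p-2) / D^p \<in> W" by (rule inW)
    moreover have "\<pi> i (mon g s e / D^p) = X * D^(p-2) / D^p"
    proof -
      have pp: "p = Suc (Suc (p - 2))" using p2 by simp
      have "mon g s e / D^p = (inverse D)^p * mon g s e" by (simp add: divide_inverse power_inverse mult.commute)
      then have "\<pi> i (mon g s e / D^p) = inverse D * \<pi> i (mon g s e)" using pipow[OF i] by simp
      also have "\<dots> = X * D^(p-2) / D^p"
      proof -
        obtain k where k: "p = k + 2" using p2 by (metis le_add_diff_inverse2)
        have Dp: "D^p = D * D * D^(p-2)" unfolding k by (simp add: power_add power2_eq_square mult_ac)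
        have "D^(p-2) \<noteq> 0" using D0 by simp
        then show ?thesis unfolding X_def Dp using D0 by (simp add: field_simps)
      qed
      finally show ?thesis .
    qed
    ultimately show ?thesis by simp
  qed
  have final: "\<pi> i ` Fp_prod V W \<subseteq> W" if i: "i < m" for i
  proof
    fix y assume "y \<in> \<pi> i ` Fp_prod V W"
    then obtain x where x: "x \<in> Fp_prod V W" "y = \<pi> i x" by blast
    have "\<pi> i x \<in> W"
    proof (rule span_image[OF lin_pi[OF i] Wsub])
      show "x \<in> Fp_span {v * w |v w. v \<in> V \<and> w \<in> W}" using x(1) unfolding Fp_prod_def .
      fix t assume "t \<in> {v * w |v w. v \<in> V \<and> w \<in> W}"
      then obtain v w where vw: "v \<in> V" "w \<in> W" "t = v * w" by blast
      have "\<pi> i (v * w) \<in> W"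
      proof (rule span_image[OF lin_comp[OF lin_pi[OF i] lin_mult] Wsub])
        show "w \<in> Fp_span ((\<lambda>x. x / D^p) ` mon g s ` Exs s L)" using vw(2) unfolding W_def .
        fix u assume "u \<in> (\<lambda>x. x / D^p) ` mon g s ` Exs s L"
        then obtain e' where e': "e' \<in> Exs s L" "u = mon g s e' / D^p" by blast
        have "v \<in> Fp_span (mon g s ` Exs s 1)" using VR1 vw unfolding Rsp_def by blast
        then show "\<pi> i (v * u) \<in> W"
        proof (rule span_image[OF lin_comp[OF lin_pi[OF i] lin_mult2] Wsub, rotated])
          fix t' assume "t' \<in> mon g s ` Exs s 1"
          then obtain e where e: "e \<in> Exs s 1" "t' = mon g s e" by blast
          have "t' * u = mon g s (\<lambda>j. e j + e' j) / D^p" unfolding e' e mon_add by simp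
          moreover have "(\<lambda>j. e j + e' j) \<in> Exs s (L + 1)" using Ex_add[OF e(1) e'(1)] by (simp add: add.commute)
          ultimately show "\<pi> i (t' * u) \<in> W" using core[OF i] by simp
        qed
      qed
      then show "\<pi> i t \<in> W" using vw by simp
    qed
    then show "y \<in> W" using x by simp
  qed
  show ?thesis using Wsub Wfin VW final by blast
qed


end
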